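(* Let $\kappa$ be a regular cardinal. For every $\alpha<\kappa^+$ there is a $\kappa$-Borel set $R_\alpha\subseteq\kappa^\kappa\times\kappa^\kappa$ which is universal for $\kappa$-$\Sigma_\alpha$, i.e. for every $A\in\kappa$-$\Sigma_\alpha$ there is $\xi\in\kappa^\kappa$ such that for all $\eta\in\kappa^\kappa$: $\eta\in A$ iff $(\eta,\xi)\in R_\alpha$.
   Context: Basic $\kappa$-open sets: $N_\eta=\{\zeta\in\kappa^\kappa\mid\eta\subseteq\zeta\}$ for $\eta:X\to\kappa$, $X\subseteq\kappa$, $|X|<\kappa$, and $\emptyset$; in $\kappa^\kappa\times\kappa^\kappa$ they are products $N_\eta\times N_\xi$. The $\kappa$-Borel sets form the smallest class containing the basic $\kappa$-open sets and closed under complements and unions and intersections of at most $\kappa$ sets. Hierarchy: $\kappa$-$\Sigma_0$ is the collection of sets $N_{\{(i,j)\}}=\{f\in\kappa^\kappa\mid f(i)=j\}$, $i,j<\kappa$. If $\alpha$ is even, $\kappa$-$\Sigma_{\alpha+1}$ is the collection of unions of $\kappa$ many $\kappa$-$\Sigma_\alpha$ sets; if $\alpha$ is odd, $\kappa$-$\Sigma_{\alpha+1}$ is the collection of intersections of $\kappa$ many $\kappa$-$\Sigma_\alpha$ sets; if $\alpha$ is a limit, $\kappa$-$\Sigma_\alpha=\bigcup_{\beta<\alpha}\kappa$-$\Sigma_\beta$. (An ordinal is even/odd according to the parity of its finite part.) *)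

theory Defs
  imports Main
begin

text \<open>kappa is represented by a type 'k together with a cardinal order r on UNIV::'k set.
  Points of kappa^kappa are functions 'k \<Rightarrow> 'k.\<close>

definition Nbasic :: "('k \<Rightarrow> 'k option) \<Rightarrow> ('k \<Rightarrow> 'k) set" where
  "Nbasic \<eta> = {\<zeta>. \<forall>x \<in> dom \<eta>. \<eta> x = Some (\<zeta> x)}"

definition small_dom :: "'k rel \<Rightarrow> ('k \<Rightarrow> 'k option) \<Rightarrow> bool" where
  "small_dom r \<eta> \<longleftrightarrow> ordLess2 (card_of (dom \<eta>)) r"

inductive_set kborel2 :: "'k rel \<Rightarrow> (('k \<Rightarrow> 'k) \<times> ('k \<Rightarrow> 'k)) set set"
  for r :: "'k rel" where
  basic: "small_dom r \<eta> \<Longrightarrow> small_dom r \<xi> \<Longrightarrow> Nbasic \<eta> \<times> Nbasic \<xi> \<in> kborel2 r"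
| empty: "{} \<in> kborel2 r"
| compl: "A \<in> kborel2 r \<Longrightarrow> - A \<in> kborel2 r"
| union: "\<forall>A \<in> F. A \<in> kborel2 r \<Longrightarrow> ordLeq3 (card_of F) r \<Longrightarrow> \<Union> F \<in> kborel2 r"
| inter: "\<forall>A \<in> F. A \<in> kborel2 r \<Longrightarrow> ordLeq3 (card_of F) r \<Longrightarrow> \<Inter> F \<in> kborel2 r"

definition is_pred :: "'k rel \<Rightarrow> 'k \<Rightarrow> 'k \<Rightarrow> bool" where
  "is_pred w b a \<longleftrightarrow> (b, a) \<in> w \<and> b \<noteq> a \<and>
     (\<forall>c. (b, c) \<in> w \<and> (c, a) \<in> w \<longrightarrow> c = b \<or> c = a)"

text \<open>Ordinals alpha < kappa^+ are represented as the order type of the initial segment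
  below an element a of a well-order w whose field is a subset of 'k (so |alpha| \<le> kappa).
  hier w a = (alpha is even, kappa-Sigma_alpha) where alpha = order type of underS w a.\<close>
definition hier :: "'k rel \<Rightarrow> 'k \<Rightarrow> bool \<times> ('k \<Rightarrow> 'k) set set" where
  "hier w = wfrec (w - Id) (\<lambda>H a.
     if (\<exists>b. is_pred w b a) then
       (let b = (SOME b. is_pred w b a); ev = fst (H b); S = snd (H b) in
         (\<not> ev,
          if ev then {\<Union> (range F) | F :: 'k \<Rightarrow> ('k \<Rightarrow> 'k) set. range F \<subseteq> S}
          else {\<Inter> (range F) | F :: 'k \<Rightarrow> ('k \<Rightarrow> 'k) set. range F \<subseteq> S}))
     else if (\<exists>b. (b, a) \<in> w - Id) then
       (True, \<Union> {snd (H b) | b. (b, a) \<in> w - Id})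
     else
       (True, {{f. f i = j} | i j. True}))"

definition kSigma :: "'k rel \<Rightarrow> 'k \<Rightarrow> ('k \<Rightarrow> 'k) set set" where
  "kSigma w a = snd (hier w a)"

end

theory Submission
  imports Defs
begin

lemma fin_less: "card_order (r::'k rel) \<Longrightarrow> infinite (UNIV::'k set) \<Longrightarrow> finite (A::'b set) \<Longrightarrow> ordLess2 (card_of A) r"
  apply (rule finite_ordLess_infinite)
  using card_of_Well_order card_order_on_well_order_on Field_card_of well_order_on_Field by metis+

lemma hier_unf: "Well_order w \<Longrightarrow> hier w a =
  (if (\<exists>b. is_pred w b a) then
       (let b = (SOME b. is_pred w b a); ev = fst (hier w b); S = snd (hier w b) in
         (\<not> ev,
          if ev then {\<Union> (range F) | F :: 'k \<Rightarrow> ('k \<Rightarrow> 'k) set. range F \<subseteq> S}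
          else {\<Inter> (range F) | F :: 'k \<Rightarrow> ('k \<Rightarrow> 'k) set. range F \<subseteq> S}))
     else if (\<exists>b. (b, a) \<in> w - Id) then
       (True, \<Union> {snd (hier w b) | b. (b, a) \<in> w - Id})
     else
       (True, {{f. f i = j} | i j. True}))"
proof -
  assume wo: "Well_order w"
  have wf: "wf (w - Id)" using wo by (simp add: well_order_on_def)
  have pw: "is_pred w b a \<Longrightarrow> (b, a) \<in> w - Id" for b by (auto simp: is_pred_def)
  have e: "{snd (cut (hier w) (w - Id) a b) | b. (b, a) \<in> w - Id} = {snd (hier w b) | b. (b, a) \<in> w - Id}"
    by (smt (verit) Collect_cong cut_apply)
  show ?thesis
    apply (subst hier_def)
    apply (subst wfrec[OF wf])
    apply (simp only: hier_def[symmetric])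
    apply (cases "\<exists>b. is_pred w b a")
    subgoal premises p
      using pw[OF someI_ex[OF p]] p by (simp add: Let_def cut_apply)
    using e by auto
qed
lemma range_leq: "card_order (r::'k rel) \<Longrightarrow> ordLeq3 (card_of (range (f::'k \<Rightarrow> 'b))) r"
  using card_of_image card_of_unique ordIso_symmetric ordLeq_ordIso_trans by blast

lemma fin_leq: "card_order (r::'k rel) \<Longrightarrow> infinite (UNIV::'k set) \<Longrightarrow> finite (A::'b set) \<Longrightarrow> ordLeq3 (card_of A) r"
  using fin_less ordLess_imp_ordLeq by blast

lemma small_fin: "card_order (r::'k rel) \<Longrightarrow> infinite (UNIV::'k set) \<Longrightarrow> finite (dom \<eta>) \<Longrightarrow> small_dom r \<eta>"
  unfolding small_dom_def using fin_less by blast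

lemma kb_Int: assumes "card_order (r::'k rel)" "infinite (UNIV::'k set)" "X \<in> kborel2 r" "Y \<in> kborel2 r"
  shows "X \<inter> Y \<in> kborel2 r"
proof -
  have "\<Inter> {X, Y} \<in> kborel2 r"
    by (rule kborel2.inter) (use assms fin_leq[OF assms(1,2), of "{X,Y}"] in auto)
  thus ?thesis by simp
qed

lemma kb_UN: assumes "card_order (r::'k rel)" "\<And>i::'k. f i \<in> kborel2 r"
  shows "(\<Union>i. f i) \<in> kborel2 r"
  by (rule kborel2.union) (use assms range_leq[OF assms(1), of f] in auto)

lemma kb_INT: assumes "card_order (r::'k rel)" "\<And>i::'k. f i \<in> kborel2 r"
  shows "(\<Inter>i. f i) \<in> kborel2 r"
  by (rule kborel2.inter) (use assms range_leq[OF assms(1), of f] in auto)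

definition pre :: "('k \<Rightarrow> 'k) \<Rightarrow> (('k \<Rightarrow> 'k) \<times> ('k \<Rightarrow> 'k)) set \<Rightarrow> (('k \<Rightarrow> 'k) \<times> ('k \<Rightarrow> 'k)) set" where
  "pre g A = {p. (fst p, snd p \<circ> g) \<in> A}"

lemma pre_basic: assumes "inj g"
  shows "pre g (Nbasic \<eta> \<times> Nbasic \<zeta>) = Nbasic \<eta> \<times> Nbasic (\<lambda>y. if y \<in> range g then \<zeta> (inv g y) else None)"
proof -
  have "(\<xi> \<circ> g \<in> Nbasic \<zeta>) \<longleftrightarrow> \<xi> \<in> Nbasic (\<lambda>y. if y \<in> range g then \<zeta> (inv g y) else None)" for \<xi>
  proof
    assume h: "\<xi> \<circ> g \<in> Nbasic \<zeta>"
    show "\<xi> \<in> Nbasic (\<lambda>y. if y \<in> range g then \<zeta> (inv g y) else None)"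
      unfolding Nbasic_def mem_Collect_eq
    proof
      fix y assume "y \<in> dom (\<lambda>y. if y \<in> range g then \<zeta> (inv g y) else None)"
      then obtain x where y: "y = g x" and x: "x \<in> dom \<zeta>"
        using assms by (auto simp: dom_def split: if_splits)
      have "\<zeta> x = Some (\<xi> (g x))" using h x unfolding Nbasic_def by auto
      then show "(if y \<in> range g then \<zeta> (inv g y) else None) = Some (\<xi> y)"
        using y assms by simp
    qed
  next
    assume h: "\<xi> \<in> Nbasic (\<lambda>y. if y \<in> range g then \<zeta> (inv g y) else None)"
    show "\<xi> \<circ> g \<in> Nbasic \<zeta>"
      unfolding Nbasic_def mem_Collect_eq
    proof
      fix x assume x: "x \<in> dom \<zeta>"
      have "g x \<in> dom (\<lambda>y. if y \<in> range g then \<zeta> (inv g y) else None)"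
        using x assms by (auto simp: dom_def)
      then have "(if g x \<in> range g then \<zeta> (inv g (g x)) else None) = Some (\<xi> (g x))"
        using h unfolding Nbasic_def by blast
      then show "\<zeta> x = Some ((\<xi> \<circ> g) x)" using assms by simp
    qed
  qed
  note eq = this
  show ?thesis
  proof (rule set_eqI)
    fix p :: "('a \<Rightarrow> 'a) \<times> ('a \<Rightarrow> 'a)"
    obtain u v where p: "p = (u, v)" by (cases p)
    show "p \<in> pre g (Nbasic \<eta> \<times> Nbasic \<zeta>) \<longleftrightarrow> p \<in> Nbasic \<eta> \<times> Nbasic (\<lambda>y. if y \<in> range g then \<zeta> (inv g y) else None)"
      unfolding p pre_def mem_Collect_eq fst_conv snd_conv mem_Times_iff using eq[of v] by blast
  qed
qed

lemma dom_shift: "dom (\<lambda>y. if y \<in> range g then \<zeta> (inv g y) else None) \<subseteq> g ` dom \<zeta>"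
proof
  fix y assume "y \<in> dom (\<lambda>y. if y \<in> range g then \<zeta> (inv g y) else None)"
  then have "y \<in> range g" "inv g y \<in> dom \<zeta>" by (auto simp: dom_def split: if_splits)
  then show "y \<in> g ` dom \<zeta>" by (metis f_inv_into_f imageI)
qed

lemma pre_kb: assumes "card_order (r::'k rel)" "inj g" "A \<in> kborel2 r"
  shows "pre g A \<in> kborel2 r"
  using assms(3)
proof (induction rule: kborel2.induct)
  case (basic \<eta> \<xi>)
  let ?z = "\<lambda>y. if y \<in> range g then \<xi> (inv g y) else None"
  have "ordLeq3 (card_of (dom ?z)) (card_of (g ` dom \<xi>))"
    by (rule card_of_mono1[OF dom_shift])
  moreover have "ordLeq3 (card_of (g ` dom \<xi>)) (card_of (dom \<xi>))"
    by (rule card_of_image)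
  ultimately have l: "ordLeq3 (card_of (dom ?z)) (card_of (dom \<xi>))"
    by (rule ordLeq_transitive)
  have "small_dom r ?z"
    using basic(2) unfolding small_dom_def by (rule ordLeq_ordLess_trans[OF l])
  then have "Nbasic \<eta> \<times> Nbasic ?z \<in> kborel2 r"
    by (rule kborel2.basic[OF basic(1)])
  then show ?case unfolding pre_basic[OF assms(2)] .
next
  case empty
  then show ?case using kborel2.empty by (simp add: pre_def)
next
  case (compl A)
  have "pre g (- A) = - pre g A" by (auto simp: pre_def)
  then show ?case using compl kborel2.compl by metis
next
  case (union F)
  have "pre g (\<Union> F) = \<Union> (pre g ` F)" by (auto simp: pre_def)
  moreover have "ordLeq3 (card_of (pre g ` F)) r" using union card_of_image ordLeq_transitive by blast
  ultimately show ?case using union kborel2.union by (metis imageE)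
next
  case (inter F)
  have "pre g (\<Inter> F) = \<Inter> (pre g ` F)" by (auto simp: pre_def)
  moreover have "ordLeq3 (card_of (pre g ` F)) r" using inter card_of_image ordLeq_transitive by blast
  ultimately show ?case using inter kborel2.inter by (metis imageE)
qed

lemma Nb0: "Nbasic Map.empty = UNIV" by (auto simp: Nbasic_def)
lemma Nb1: "Nbasic [c\<mapsto>b] = {\<xi>. \<xi> c = b}" by (auto simp: Nbasic_def)
lemma Nb2: "c \<noteq> d \<Longrightarrow> Nbasic [c\<mapsto>i, d\<mapsto>j] = {\<xi>. \<xi> c = i \<and> \<xi> d = j}" by (auto simp: Nbasic_def)

theorem lemma3p16:
  fixes r :: "'k rel" and w :: "'k rel" and a :: 'k
  assumes "card_order r" and "infinite (UNIV :: 'k set)" and "regularCard r"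
    and "Well_order w" and "a \<in> Field w"
  shows "\<exists>R \<in> kborel2 r. \<forall>A \<in> kSigma w a. \<exists>\<xi>. \<forall>\<eta>. \<eta> \<in> A \<longleftrightarrow> (\<eta>, \<xi>) \<in> R"
proof -
  note r = assms(1) and inf = assms(2) and wo = assms(4)
  have wf: "wf (w - Id)" using wo by (simp add: well_order_on_def)
  have "ordIso2 (card_of ((UNIV::'k set) \<times> (UNIV::'k set))) (card_of (UNIV::'k set))"
    using card_of_Times_same_infinite[OF inf] .
  then obtain \<pi> :: "'k \<times> 'k \<Rightarrow> 'k" where bij0: "bij_betw \<pi> (UNIV \<times> UNIV) UNIV"
    using card_of_ordIso by blast
  have bij: "bij \<pi>" using bij0 by simp
  have injpi: "inj \<pi>" using bij bij_is_inj by blast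
  have invpi: "inv \<pi> (\<pi> p) = p" for p using injpi by simp
  have inj_row: "inj (\<lambda>j. \<pi> (i, j))" for i
  proof (rule inj_onI)
    fix x y assume "\<pi> (i, x) = \<pi> (i, y)"
    from injD[OF injpi this] show "x = y" by simp
  qed
  obtain x0 :: 'k where True by blast
  have "UNIV \<noteq> {x0}" using inf by (metis finite.emptyI finite.insertI)
  then obtain x1 where x10: "x1 \<noteq> x0" by blast
  have main: "\<exists>R\<in>kborel2 r. \<forall>A\<in>snd (hier w a). \<exists>\<xi>. \<forall>\<eta>. \<eta> \<in> A \<longleftrightarrow> (\<eta>, \<xi>) \<in> R" for a
  proof (induction a rule: wf_induct_rule[OF wf])
    case (1 a)
    show ?case
    proof (cases "\<exists>b. is_pred w b a")
      case True
      define b where "b = (SOME b. is_pred w b a)"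
      have "is_pred w b a" unfolding b_def using True by (rule someI_ex)
      then have "(b, a) \<in> w - Id" by (auto simp: is_pred_def)
      then obtain Rb where Rb: "Rb \<in> kborel2 r" "\<forall>A\<in>snd (hier w b). \<exists>\<xi>. \<forall>\<eta>. \<eta> \<in> A \<longleftrightarrow> (\<eta>, \<xi>) \<in> Rb"
        using 1 by blast
      have h: "snd (hier w a) = (if fst (hier w b) then {\<Union> (range F) |F :: 'k \<Rightarrow> ('k \<Rightarrow> 'k) set. range F \<subseteq> snd (hier w b)}
               else {\<Inter> (range F) |F :: 'k \<Rightarrow> ('k \<Rightarrow> 'k) set. range F \<subseteq> snd (hier w b)})"
        using hier_unf[OF wo, of a] True b_def by (simp add: Let_def)
      define P where "P i = pre (\<lambda>j. \<pi> (i, j)) Rb" for i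
      have Pk: "P i \<in> kborel2 r" for i unfolding P_def using pre_kb[OF r inj_row Rb(1)] .
      have key: "\<exists>\<xi>. \<forall>i \<eta>. (\<eta>, \<xi>) \<in> P i \<longleftrightarrow> \<eta> \<in> F i" if "range F \<subseteq> snd (hier w b)" for F :: "'k \<Rightarrow> ('k \<Rightarrow> 'k) set"
      proof -
        from that Rb(2) have "\<forall>i. \<exists>\<xi>. \<forall>\<eta>. \<eta> \<in> F i \<longleftrightarrow> (\<eta>, \<xi>) \<in> Rb" by blast
        then obtain X where X: "\<forall>i \<eta>. \<eta> \<in> F i \<longleftrightarrow> (\<eta>, X i) \<in> Rb" by metis
        define \<xi> where "\<xi> m = X (fst (inv \<pi> m)) (snd (inv \<pi> m))" for m
        have e: "\<xi> \<circ> (\<lambda>j. \<pi> (i, j)) = X i" for i by (auto simp: \<xi>_def invpi)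
        have "\<forall>i \<eta>. (\<eta>, \<xi>) \<in> P i \<longleftrightarrow> \<eta> \<in> F i" using X e by (simp add: P_def pre_def)
        then show ?thesis by blast
      qed
      show ?thesis
      proof (cases "fst (hier w b)")
        case True
        show ?thesis
        proof (intro bexI ballI)
          show "(\<Union>i. P i) \<in> kborel2 r" by (rule kb_UN[OF r Pk])
          fix A assume "A \<in> snd (hier w a)"
          then obtain F :: "'k \<Rightarrow> ('k \<Rightarrow> 'k) set" where A: "A = \<Union> (range F)" "range F \<subseteq> snd (hier w b)" using h True by auto
          from key[OF A(2)] obtain \<xi> where "\<forall>i \<eta>. (\<eta>, \<xi>) \<in> P i \<longleftrightarrow> \<eta> \<in> F i" by blast
          then show "\<exists>\<xi>. \<forall>\<eta>. \<eta> \<in> A \<longleftrightarrow> (\<eta>, \<xi>) \<in> (\<Union>i. P i)" using A by auto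
        qed
      next
        case False
        show ?thesis
        proof (intro bexI ballI)
          show "(\<Inter>i. P i) \<in> kborel2 r" by (rule kb_INT[OF r Pk])
          fix A assume "A \<in> snd (hier w a)"
          then obtain F :: "'k \<Rightarrow> ('k \<Rightarrow> 'k) set" where A: "A = \<Inter> (range F)" "range F \<subseteq> snd (hier w b)" using h False by auto
          from key[OF A(2)] obtain \<xi> where "\<forall>i \<eta>. (\<eta>, \<xi>) \<in> P i \<longleftrightarrow> \<eta> \<in> F i" by blast
          then show "\<exists>\<xi>. \<forall>\<eta>. \<eta> \<in> A \<longleftrightarrow> (\<eta>, \<xi>) \<in> (\<Inter>i. P i)" using A by auto
        qed
      qed
    next
      case nopred: False
      show ?thesis
      proof (cases "\<exists>b. (b, a) \<in> w - Id")
        case True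
        have h: "snd (hier w a) = \<Union> {snd (hier w b) | b. (b, a) \<in> w - Id}"
          using hier_unf[OF wo, of a] nopred True by simp
        define Rf where "Rf b = (SOME R. R \<in> kborel2 r \<and> (\<forall>A\<in>snd (hier w b). \<exists>\<xi>. \<forall>\<eta>. \<eta> \<in> A \<longleftrightarrow> (\<eta>, \<xi>) \<in> R))" for b
        have Rf: "Rf b \<in> kborel2 r \<and> (\<forall>A\<in>snd (hier w b). \<exists>\<xi>. \<forall>\<eta>. \<eta> \<in> A \<longleftrightarrow> (\<eta>, \<xi>) \<in> Rf b)"
          if "(b, a) \<in> w - Id" for b
        proof -
          have "\<exists>R. R \<in> kborel2 r \<and> (\<forall>A\<in>snd (hier w b). \<exists>\<xi>. \<forall>\<eta>. \<eta> \<in> A \<longleftrightarrow> (\<eta>, \<xi>) \<in> R)"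
            using 1 that by blast
          then show ?thesis unfolding Rf_def by (rule someI_ex)
        qed
        define g where "g j = \<pi> (x1, j)" for j
        define c0 where "c0 = \<pi> (x0, x0)"
        have injg: "inj g" using inj_row unfolding g_def by blast
        have gc0: "g j \<noteq> c0" for j unfolding g_def c0_def using injpi x10 by (metis inj_eq prod.inject)
        define Q where "Q b = (if (b, a) \<in> w - Id then (Nbasic Map.empty \<times> Nbasic [c0 \<mapsto> b]) \<inter> pre g (Rf b) else {})" for b
        have Qk: "Q b \<in> kborel2 r" for b
        proof (cases "(b, a) \<in> w - Id")
          case True
          have "Nbasic Map.empty \<times> Nbasic [c0 \<mapsto> b] \<in> kborel2 r"
            by (rule kborel2.basic) (auto intro!: small_fin[OF r inf])
          moreover have "pre g (Rf b) \<in> kborel2 r" using pre_kb[OF r injg] Rf True by blast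
          ultimately show ?thesis unfolding Q_def using True kb_Int[OF r inf] by simp
        next
          case False
          then have "Q b = {}" unfolding Q_def by (simp only: if_False)
          then show ?thesis using kborel2.empty[of r] by simp
        qed
        show ?thesis
        proof (intro bexI ballI)
          show "(\<Union>b. Q b) \<in> kborel2 r" by (rule kb_UN[OF r Qk])
          fix A assume "A \<in> snd (hier w a)"
          then obtain b where b: "(b, a) \<in> w - Id" "A \<in> snd (hier w b)" using h by auto
          then obtain \<xi>b where \<xi>b: "\<forall>\<eta>. \<eta> \<in> A \<longleftrightarrow> (\<eta>, \<xi>b) \<in> Rf b" using Rf by blast
          define \<xi> where "\<xi> m = (if m = c0 then b else \<xi>b (snd (inv \<pi> m)))" for m
          have e: "\<xi> \<circ> g = \<xi>b" using gc0 by (auto simp: \<xi>_def g_def invpi)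
          have "\<xi> c0 = b" by (simp add: \<xi>_def)
          then have "(\<eta>, \<xi>) \<in> (\<Union>b. Q b) \<longleftrightarrow> (\<eta>, \<xi>b) \<in> Rf b" for \<eta>
            using b e by (auto simp: Q_def Nb0 Nb1 pre_def)
          then show "\<exists>\<xi>. \<forall>\<eta>. \<eta> \<in> A \<longleftrightarrow> (\<eta>, \<xi>) \<in> (\<Union>b. Q b)" using \<xi>b by blast
        qed
      next
        case False
        have h: "snd (hier w a) = {{f::'k \<Rightarrow> 'k. f i = j} | i j. True}"
          using hier_unf[OF wo, of a] nopred False by auto
        define B where "B m = Nbasic [fst (inv \<pi> m) \<mapsto> snd (inv \<pi> m)] \<times> Nbasic [x0 \<mapsto> fst (inv \<pi> m), x1 \<mapsto> snd (inv \<pi> m)]" for m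
        have Bk: "B m \<in> kborel2 r" for m
          unfolding B_def by (rule kborel2.basic) (auto intro!: small_fin[OF r inf])
        show ?thesis
        proof (intro bexI ballI)
          show "(\<Union>m. B m) \<in> kborel2 r" by (rule kb_UN[OF r Bk])
          fix A assume "A \<in> snd (hier w a)"
          then obtain i j where A: "A = {f. f i = j}" using h by auto
          define \<xi> where "\<xi> = (\<lambda>_. i)(x1 := j)"
          have "(\<eta>, \<xi>) \<in> (\<Union>m. B m) \<longleftrightarrow> \<eta> i = j" for \<eta>
          proof
            assume "(\<eta>, \<xi>) \<in> (\<Union>m. B m)"
            then obtain m where "(\<eta>, \<xi>) \<in> B m" by blast
            then show "\<eta> i = j" using x10 unfolding B_def Nb1 Nb2[OF x10[symmetric]] \<xi>_def by auto
          next
            assume "\<eta> i = j"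
            then have "(\<eta>, \<xi>) \<in> B (\<pi> (i, j))" using x10 unfolding B_def Nb1 Nb2[OF x10[symmetric]] \<xi>_def
              by (auto simp: invpi)
            then show "(\<eta>, \<xi>) \<in> (\<Union>m. B m)" by blast
          qed
          then show "\<exists>\<xi>. \<forall>\<eta>. \<eta> \<in> A \<longleftrightarrow> (\<eta>, \<xi>) \<in> (\<Union>m. B m)" using A by blast
        qed
      qed
    qed
  qed
  show ?thesis using main[of a] unfolding kSigma_def by blast
qed

end
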